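(* Let $G$ be a finite simple undirected graph. Then there exists an integer $n\ge 2$ such that $G$ is isomorphic to an induced subgraph of $G(n)$.
   Context: For an integer $n\ge 2$, let $V(n)$ be the set of all divisors of $n$ that are greater than $1$. The graph $G(n)$ is the simple undirected graph with vertex set $V(n)$ in which two distinct vertices $a,b$ are adjacent if and only if $\gcd(a,b)>1$. *)

theory Defs
  imports Main
begin

definition divisor_vertices :: "nat \<Rightarrow> nat set" where
  "divisor_vertices n = {d. d dvd n \<and> d > 1}"

definition divisor_adj :: "nat \<Rightarrow> nat \<Rightarrow> nat \<Rightarrow> bool" where
  "divisor_adj n a b \<longleftrightarrow> a \<in> divisor_vertices n \<and> b \<in> divisor_vertices n \<and> a \<noteq> b \<and> gcd a b > 1"

definition simple_graph :: "'a set \<Rightarrow> ('a \<Rightarrow> 'a \<Rightarrow> bool) \<Rightarrow> bool" where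
  "simple_graph V E \<longleftrightarrow> finite V \<and> (\<forall>x y. E x y \<longrightarrow> x \<in> V \<and> y \<in> V)
     \<and> (\<forall>x y. E x y \<longrightarrow> E y x) \<and> (\<forall>x. \<not> E x x)"

definition induced_embedding ::
  "'a set \<Rightarrow> ('a \<Rightarrow> 'a \<Rightarrow> bool) \<Rightarrow> 'b set \<Rightarrow> ('b \<Rightarrow> 'b \<Rightarrow> bool) \<Rightarrow> ('a \<Rightarrow> 'b) \<Rightarrow> bool" where
  "induced_embedding V E W F f \<longleftrightarrow> inj_on f V \<and> f ` V \<subseteq> W
     \<and> (\<forall>x\<in>V. \<forall>y\<in>V. E x y \<longleftrightarrow> F (f x) (f y))"

end

theory Submission
  imports Defs "HOL-Computational_Algebra.Primes"
begin

lemma prime_dvd_prod_primes: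
  fixes p :: "'b \<Rightarrow> nat"
  assumes "finite A" "\<forall>x\<in>A. prime (p x)" "prime q"
  shows "q dvd prod p A \<longleftrightarrow> q \<in> p ` A"
proof
  assume "q dvd prod p A"
  then obtain x where "x \<in> A" "q dvd p x" using prime_dvd_prod_iff assms by blast
  then have "q = p x" using primes_dvd_imp_eq assms by blast
  then show "q \<in> p ` A" using \<open>x \<in> A\<close> by blast
next
  assume "q \<in> p ` A"
  then show "q dvd prod p A" using assms by (auto intro: dvd_prodI)
qed

lemma prod_primes_pos:
  fixes p :: "'b \<Rightarrow> nat"
  assumes "finite A" "\<forall>x\<in>A. prime (p x)"
  shows "prod p A > 0"
  using assms by (simp add: prime_gt_0_nat)

lemma gcd_prod_primes:
  fixes p :: "'b \<Rightarrow> nat"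
  assumes "finite A" "finite B" "\<forall>x\<in>A\<union>B. prime (p x)" "inj_on p (A \<union> B)"
  shows "gcd (prod p A) (prod p B) > 1 \<longleftrightarrow> A \<inter> B \<noteq> {}"
proof
  assume g: "gcd (prod p A) (prod p B) > 1"
  then obtain q where q: "prime q" "q dvd gcd (prod p A) (prod p B)"
    using prime_factor_nat[of "gcd (prod p A) (prod p B)"] by auto
  then have "q dvd prod p A" "q dvd prod p B" by auto
  then have "q \<in> p ` A" "q \<in> p ` B"
    using prime_dvd_prod_primes[of A p q] prime_dvd_prod_primes[of B p q] assms q(1) by auto
  then obtain a b where "a \<in> A" "b \<in> B" "p a = p b" by force
  then have "a = b" using assms(4) by (auto dest: inj_onD)
  then show "A \<inter> B \<noteq> {}" using \<open>a \<in> A\<close> \<open>b \<in> B\<close> by blast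
next
  assume "A \<inter> B \<noteq> {}"
  then obtain x where x: "x \<in> A" "x \<in> B" by blast
  then have "p x dvd prod p A" "p x dvd prod p B" using assms by (auto intro: dvd_prodI)
  then have "p x dvd gcd (prod p A) (prod p B)" by simp
  moreover have "prod p A > 0" using prod_primes_pos[of A p] assms by auto
  then have "gcd (prod p A) (prod p B) > 0" by simp
  ultimately have "p x \<le> gcd (prod p A) (prod p B)" by (simp add: dvd_imp_le)
  moreover have "p x > 1" using assms x prime_gt_1_nat by blast
  ultimately show "gcd (prod p A) (prod p B) > 1" by simp
qed

theorem theorem1:
  fixes V :: "'a set" and E :: "'a \<Rightarrow> 'a \<Rightarrow> bool"
  assumes "simple_graph V E"
  shows "\<exists>n::nat. n \<ge> 2 \<and> (\<exists>f. induced_embedding V E (divisor_vertices n) (divisor_adj n) f)"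
proof -
  have fV: "finite V" and EV: "\<And>x y. E x y \<Longrightarrow> x \<in> V \<and> y \<in> V"
    and Es: "\<And>x y. E x y \<Longrightarrow> E y x" and Ei: "\<And>x. \<not> E x x"
    using assms unfolding simple_graph_def by auto
  define S where "S v = {Inl v} \<union> Inr ` ((\<lambda>w. {v,w}) ` {w\<in>V. E v w})" for v
  define T where "T = (\<Union>v\<in>V. S v)"
  have fS: "finite (S v)" for v using fV unfolding S_def by auto
  have fT: "finite T" unfolding T_def using fV fS by auto
  obtain B where B: "finite B" "card B = card T" "B \<subseteq> {p::nat. prime p}"
    using infinite_arbitrarily_large[OF primes_infinite] by blast
  obtain p where p: "p ` T \<subseteq> B" "inj_on p T"
    using card_le_inj[OF fT B(1)] B(2) by auto
  have pp: "\<forall>x\<in>T. prime (p x)" using p B by auto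
  have ST: "v \<in> V \<Longrightarrow> S v \<subseteq> T" for v unfolding T_def by auto
  define f where "f v = prod p (S v)" for v
  have key: "u \<in> V \<Longrightarrow> v \<in> V \<Longrightarrow> gcd (f u) (f v) > 1 \<longleftrightarrow> S u \<inter> S v \<noteq> {}" for u v
    unfolding f_def
  proof (rule gcd_prod_primes[OF fS fS])
    assume "u \<in> V" "v \<in> V"
    then have "S u \<union> S v \<subseteq> T" using ST by auto
    then show "\<forall>x\<in>S u \<union> S v. prime (p x)" "inj_on p (S u \<union> S v)"
      using pp p(2) inj_on_subset by blast+
  qed
  have inter: "u \<in> V \<Longrightarrow> v \<in> V \<Longrightarrow> u \<noteq> v \<Longrightarrow> S u \<inter> S v \<noteq> {} \<longleftrightarrow> E u v" for u v
  proof
    assume "u \<in> V" "v \<in> V" "u \<noteq> v" "S u \<inter> S v \<noteq> {}"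
    then obtain w w' where "E u w" "E v w'" "{u,w} = {v,w'}" unfolding S_def by auto
    then show "E u v" using \<open>u \<noteq> v\<close> by (metis doubleton_eq_iff)
  next
    assume "u \<in> V" "v \<in> V" "u \<noteq> v" "E u v"
    then have "E v u" "{v,u} = {u,v}" using Es by (auto simp: insert_commute)
    have "v \<in> {w\<in>V. E u w}" "u \<in> {w\<in>V. E v w}" using EV \<open>E u v\<close> \<open>E v u\<close> by auto
    then have "{u,v} \<in> (\<lambda>w. {u,w}) ` {w\<in>V. E u w}" "{v,u} \<in> (\<lambda>w. {v,w}) ` {w\<in>V. E v w}"
      by blast+
    then have "Inr {u,v} \<in> S u" "Inr {u,v} \<in> S v" unfolding S_def using \<open>{v,u} = {u,v}\<close>
      by auto
    then show "S u \<inter> S v \<noteq> {}" by blast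
  qed
  have fpos: "f v > 1" if "v \<in> V" for v
  proof -
    have "Inl v \<in> S v" unfolding S_def by auto
    then have "p (Inl v) dvd f v" unfolding f_def using fS by (auto intro: dvd_prodI)
    moreover have "\<forall>x\<in>S v. prime (p x)" using pp ST that by blast
    then have "f v > 0" unfolding f_def using prod_primes_pos[OF fS] by blast
    moreover have "Inl v \<in> T" using ST that \<open>Inl v \<in> S v\<close> by blast
    then have "prime (p (Inl v))" using pp by blast
    then have "p (Inl v) > 1" by (rule prime_gt_1_nat)
    ultimately have "p (Inl v) \<le> f v" "p (Inl v) > 1" using dvd_imp_le by blast+
    then show ?thesis by linarith
  qed
  have finj: "inj_on f V"
  proof (rule inj_onI)
    fix u v assume uv: "u \<in> V" "v \<in> V" "f u = f v"
    have "gcd (f u) (f v) > 1" using uv fpos by simp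
    show "u = v"
    proof (rule ccontr)
      assume "u \<noteq> v"
      have "Inl u \<in> S u" unfolding S_def by auto
      then have "p (Inl u) dvd f v" using uv fS unfolding f_def by (metis dvd_prodI)
      moreover have "prime (p (Inl u))" using pp ST uv \<open>Inl u \<in> S u\<close> by auto
      ultimately have "p (Inl u) \<in> p ` S v"
        using prime_dvd_prod_primes[OF fS, of v p] pp ST uv unfolding f_def by blast
      then obtain x where "x \<in> S v" "p (Inl u) = p x" by auto
      then have "x = Inl u" using p(2) ST uv \<open>Inl u \<in> S u\<close> by (auto dest: inj_onD)
      then show False using \<open>x \<in> S v\<close> \<open>u \<noteq> v\<close> unfolding S_def by auto
    qed
  qed
  define n where "n = 2 * prod f V"
  have "\<forall>a\<in>V. 0 < f a" using fpos by fastforce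
  then have "prod f V > 0" by (simp add: fV)
  then have n2: "n \<ge> 2" unfolding n_def by simp
  have fvert: "f v \<in> divisor_vertices n" if "v \<in> V" for v
  proof -
    have "f v dvd prod f V" using fV that by (rule dvd_prodI)
    then have "f v dvd n" unfolding n_def by simp
    then show ?thesis using fpos[OF that] unfolding divisor_vertices_def by simp
  qed
  have "induced_embedding V E (divisor_vertices n) (divisor_adj n) f"
    unfolding induced_embedding_def
  proof (intro conjI ballI)
    show "inj_on f V" by (rule finj)
    show "f ` V \<subseteq> divisor_vertices n" using fvert by auto
  next
    fix x y assume xy: "x \<in> V" "y \<in> V"
    show "E x y \<longleftrightarrow> divisor_adj n (f x) (f y)"
    proof (cases "x = y")
      case True then show ?thesis using Ei unfolding divisor_adj_def by auto
    next
      case False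
      then have "f x \<noteq> f y" using finj xy by (auto dest: inj_onD)
      then show ?thesis using key[OF xy] inter[OF xy False] fvert xy unfolding divisor_adj_def by auto
    qed
  qed
  then show ?thesis using n2 by blast
qed

end
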